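(* Let $R$ be a commutative unital ring, $G$ a group and $(\mathcal B_1,\Phi_1)\subseteq(\mathcal B_2,\Phi_2)$ a partial subaction of $G$ on generalized Boolean algebras, $\Phi_k=(\{\mathcal I_{k,t}\},\{\phi_{k,t}\})$. Suppose $\mathcal B_1$ is an ideal of $\mathcal B_2$ and $\mathcal I_{1,g}=\mathcal B_1\cap\mathcal I_{2,g}$ for all $g\in G$. Then $\mathrm{Lc}(R,\mathcal B_1)\rtimes_{\Phi_1}G$ is a two-sided ideal of $\mathrm{Lc}(R,\mathcal B_2)\rtimes_{\Phi_2}G$.
   Context: A generalized Boolean algebra is a distributive relatively complemented lattice with least element $0$; an ideal is a subset closed under finite joins and under meets with arbitrary elements. A partial action $\Phi$ of $G$ on $\mathcal B$: ideals $\mathcal I_t$ and isomorphisms $\phi_t:\mathcal I_{t^{-1}}\to\mathcal I_t$ with $\mathcal I_e=\mathcal B$, $\phi_e=\mathrm{id}$, $\phi_s(\mathcal I_{s^{-1}}\cap\mathcal I_t)=\mathcal I_s\cap\mathcal I_{st}$, $\phi_s\phi_t=\phi_{st}$ where defined. A partial subaction: $\mathcal B_1\subseteq\mathcal B_2$ sub generalized Boolean algebra, $\mathcal I_{1,t}\subseteq\mathcal I_{2,t}$, $\phi_{2,t}$ restricting to $\phi_{1,t}$. $\mathrm{Lc}(R,\mathcal B)$ is the algebra of locally constant compactly supported $R$-valued functions on the Stone space of $\mathcal B$, spanned by idempotents $1_U$; $\mathrm{Lc}(R,\mathcal B)\rtimes_\Phi G=\bigoplus_g\mathrm{Lc}(R,\mathcal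 I_g)\delta_g$ with $U\delta_g:=1_U\delta_g$ and $(U\delta_g)(V\delta_h)=\phi_g(\phi_{g^{-1}}(U)\cap V)\delta_{gh}$. The subalgebra $\mathrm{Lc}(R,\mathcal B_1)\rtimes_{\Phi_1}G$ is identified with the $R$-span of $\{U\delta_g:U\in\mathcal I_{1,g}\}$. *)

theory Defs
  imports Main "HOL-Library.Indicator_Function"
begin

text \<open>Generalized Boolean algebras are represented (via Stone duality) as rings of sets:
  families of subsets of a type closed under union, intersection and relative complement,
  containing the empty set. Elements of Lc(R,B) are represented as the R-valued functions
  spanned by indicator functions of members of B.\<close>

definition gba :: "'x set set \<Rightarrow> bool" where
  "gba B \<longleftrightarrow> {} \<in> B \<and> (\<forall>U\<in>B. \<forall>V\<in>B. U \<union> V \<in> B \<and> U \<inter> V \<in> B \<and> U - V \<in> B)"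

definition gba_ideal :: "'x set set \<Rightarrow> 'x set set \<Rightarrow> bool" where
  "gba_ideal B J \<longleftrightarrow> J \<subseteq> B \<and> {} \<in> J \<and> (\<forall>U\<in>J. \<forall>V\<in>J. U \<union> V \<in> J)
      \<and> (\<forall>U\<in>J. \<forall>V\<in>B. U \<inter> V \<in> J)"

text \<open>Partial action of the group (written additively, not necessarily abelian).\<close>
definition partial_action ::
  "'x set set \<Rightarrow> ('g::group_add \<Rightarrow> 'x set set) \<Rightarrow> ('g \<Rightarrow> 'x set \<Rightarrow> 'x set) \<Rightarrow> bool" where
  "partial_action B I \<phi> \<longleftrightarrow>
     gba B
   \<and> (\<forall>t. gba_ideal B (I t))
   \<and> (\<forall>t. bij_betw (\<phi> t) (I (- t)) (I t)
          \<and> \<phi> t {} = {}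
          \<and> (\<forall>U\<in>I (- t). \<forall>V\<in>I (- t).
                \<phi> t (U \<union> V) = \<phi> t U \<union> \<phi> t V \<and> \<phi> t (U \<inter> V) = \<phi> t U \<inter> \<phi> t V))
   \<and> I 0 = B
   \<and> (\<forall>U\<in>B. \<phi> 0 U = U)
   \<and> (\<forall>s t. \<phi> s ` (I (- s) \<inter> I t) = I s \<inter> I (s + t))
   \<and> (\<forall>s t U. U \<in> I (- t) \<longrightarrow> \<phi> t U \<in> I (- s) \<longrightarrow> \<phi> s (\<phi> t U) = \<phi> (s + t) U)"

definition partial_subaction ::
  "'x set set \<Rightarrow> ('g::group_add \<Rightarrow> 'x set set) \<Rightarrow> ('g \<Rightarrow> 'x set \<Rightarrow> 'x set)
   \<Rightarrow> 'x set set \<Rightarrow> ('g \<Rightarrow> 'x set set) \<Rightarrow> ('g \<Rightarrow> 'x set \<Rightarrow> 'x set) \<Rightarrow> bool" where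
  "partial_subaction B1 I1 \<phi>1 B2 I2 \<phi>2 \<longleftrightarrow>
     partial_action B1 I1 \<phi>1 \<and> partial_action B2 I2 \<phi>2
   \<and> B1 \<subseteq> B2
   \<and> (\<forall>t. I1 t \<subseteq> I2 t)
   \<and> (\<forall>t. \<forall>U\<in>I1 (- t). \<phi>1 t U = \<phi>2 t U)"

definition Lc :: "'x set set \<Rightarrow> ('x \<Rightarrow> 'r::comm_ring_1) set" where
  "Lc I = {f. \<exists>S c. finite S \<and> S \<subseteq> I \<and> f = (\<lambda>x. \<Sum>U\<in>S. c U * indicator U x)}"

text \<open>The R-linear map Lc(R,I) -> Lc(R,psi(I)) induced by psi, i.e. 1_U |-> 1_(psi U).\<close>
definition lc_map :: "'x set set \<Rightarrow> ('x set \<Rightarrow> 'x set) \<Rightarrow> ('x \<Rightarrow> 'r) \<Rightarrow> ('x \<Rightarrow> 'r::comm_ring_1)" where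
  "lc_map I \<psi> f = (THE F. \<exists>S c. finite S \<and> S \<subseteq> I
       \<and> f = (\<lambda>x. \<Sum>U\<in>S. c U * indicator U x)
       \<and> F = (\<lambda>x. \<Sum>U\<in>S. c U * indicator (\<psi> U) x))"

text \<open>Carrier of the crossed product: finitely supported families (a_g) with a_g in Lc(R, I_g),
  standing for the sum of a_g delta_g.\<close>
definition cp_carrier :: "('g \<Rightarrow> 'x set set) \<Rightarrow> ('g \<Rightarrow> 'x \<Rightarrow> 'r::comm_ring_1) set" where
  "cp_carrier I = {a. finite {g. a g \<noteq> (\<lambda>_. 0)} \<and> (\<forall>g. a g \<in> Lc (I g))}"

text \<open>Product: (f delta_g)(f' delta_h) = phi_g(phi_{g^-1}(f) f') delta_{gh}.\<close>
definition cp_mult :: "('g::group_add \<Rightarrow> 'x set set) \<Rightarrow> ('g \<Rightarrow> 'x set \<Rightarrow> 'x set)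
    \<Rightarrow> ('g \<Rightarrow> 'x \<Rightarrow> 'r) \<Rightarrow> ('g \<Rightarrow> 'x \<Rightarrow> 'r) \<Rightarrow> ('g \<Rightarrow> 'x \<Rightarrow> 'r::comm_ring_1)" where
  "cp_mult I \<phi> a b = (\<lambda>k x. \<Sum>g\<in>{g. a g \<noteq> (\<lambda>_. 0)}.
       lc_map (I (- g)) (\<phi> g)
         (\<lambda>y. lc_map (I g) (\<phi> (- g)) (a g) y * b (- g + k) y) x)"

definition two_sided_ideal ::
  "('a \<Rightarrow> 'x \<Rightarrow> 'r::comm_ring_1) set \<Rightarrow> ('a \<Rightarrow> 'x \<Rightarrow> 'r) set
   \<Rightarrow> (('a \<Rightarrow> 'x \<Rightarrow> 'r) \<Rightarrow> ('a \<Rightarrow> 'x \<Rightarrow> 'r) \<Rightarrow> ('a \<Rightarrow> 'x \<Rightarrow> 'r)) \<Rightarrow> bool" where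
  "two_sided_ideal A C mult \<longleftrightarrow>
     A \<subseteq> C \<and> (\<lambda>_ _. 0) \<in> A
   \<and> (\<forall>a\<in>A. \<forall>b\<in>A. (\<lambda>k x. a k x + b k x) \<in> A)
   \<and> (\<forall>a\<in>A. \<forall>r. (\<lambda>k x. r * a k x) \<in> A)
   \<and> (\<forall>a\<in>A. \<forall>b\<in>C. mult a b \<in> A \<and> mult b a \<in> A)"

end

theory Submission
  imports Defs
begin

definition hom_on :: "'x set set \<Rightarrow> ('x set \<Rightarrow> 'x set) \<Rightarrow> bool" where
  "hom_on I \<psi> \<longleftrightarrow> {} \<in> I \<and> \<psi> {} = {} \<and>
     (\<forall>U\<in>I. \<forall>V\<in>I. U \<union> V \<in> I \<and> U \<inter> V \<in> I \<and> U - V \<in> I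
        \<and> \<psi> (U \<union> V) = \<psi> U \<union> \<psi> V \<and> \<psi> (U \<inter> V) = \<psi> U \<inter> \<psi> V)"

lemma hom_Inter:
  assumes h: "hom_on I \<psi>" and "finite T" "T \<noteq> {}" "T \<subseteq> I"
  shows "\<Inter>T \<in> I \<and> \<psi> (\<Inter>T) = \<Inter>(\<psi> ` T)"
  using assms(2,3,4)
proof (induction T rule: finite_ne_induct)
  case (singleton x) then show ?case by auto
next
  case (insert x F)
  then show ?case using h unfolding hom_on_def by auto
qed

lemma hom_Union:
  assumes h: "hom_on I \<psi>" and "finite T" "T \<subseteq> I"
  shows "\<Union>T \<in> I \<and> \<psi> (\<Union>T) = \<Union>(\<psi> ` T)"
  using assms(2,3)
proof (induction T rule: finite_induct)
  case empty then show ?case using h unfolding hom_on_def by auto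
next
  case (insert x F)
  then show ?case using h unfolding hom_on_def by auto
qed

lemma hom_diff:
  assumes h: "hom_on I \<psi>" and P: "P \<in> I" and Q: "Q \<in> I"
  shows "\<psi> (P - Q) = \<psi> P - \<psi> Q"
proof -
  have D: "P - Q \<in> I" "P \<inter> Q \<in> I" using h P Q unfolding hom_on_def by auto
  have "\<psi> P = \<psi> ((P - Q) \<union> (P \<inter> Q))" by (metis Diff_partition Int_lower1 Un_Diff_Int)
  also have "\<dots> = \<psi> (P - Q) \<union> (\<psi> P \<inter> \<psi> Q)" using h D P Q unfolding hom_on_def by auto
  finally have 1: "\<psi> P = \<psi> (P - Q) \<union> (\<psi> P \<inter> \<psi> Q)" .
  have e: "(P - Q) \<inter> Q = {}" by blast
  have "\<psi> (P - Q) \<inter> \<psi> Q = \<psi> ((P - Q) \<inter> Q)" using h D Q unfolding hom_on_def by auto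
  also have "\<dots> = {}" using h e unfolding hom_on_def by simp
  finally have 2: "\<psi> (P - Q) \<inter> \<psi> Q = {}" .
  from 1 2 show ?thesis by blast
qed

lemma hom_atom:
  assumes h: "hom_on I \<psi>" and N: "finite N" "N \<subseteq> I" and U0: "U0 \<in> N" "y \<in> \<psi> U0"
  shows "\<exists>x. \<forall>U\<in>N. x \<in> U \<longleftrightarrow> y \<in> \<psi> U"
proof -
  define T where "T = {U\<in>N. y \<in> \<psi> U}"
  define R where "R = N - T"
  have T: "finite T" "T \<noteq> {}" "T \<subseteq> I" using N U0 unfolding T_def by auto
  have R: "finite R" "R \<subseteq> I" using N unfolding R_def by auto
  note P = hom_Inter[OF h T] and Q = hom_Union[OF h R]
  have "\<psi> (\<Inter>T - \<Union>R) = \<psi> (\<Inter>T) - \<psi> (\<Union>R)" using hom_diff[OF h] P Q by blast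
  also have "\<dots> = \<Inter>(\<psi> ` T) - \<Union>(\<psi> ` R)" using P Q by simp
  finally have eq: "\<psi> (\<Inter>T - \<Union>R) = \<Inter>(\<psi> ` T) - \<Union>(\<psi> ` R)" .
  have yT: "y \<in> \<Inter>(\<psi> ` T)" unfolding T_def by blast
  have yR: "y \<notin> \<Union>(\<psi> ` R)" unfolding R_def T_def by blast
  have "y \<in> \<psi> (\<Inter>T - \<Union>R)" using eq yT yR by simp
  moreover have "\<psi> {} = {}" using h unfolding hom_on_def by blast
  ultimately have "\<Inter>T - \<Union>R \<noteq> {}" by (metis empty_iff)
  then obtain x where x: "x \<in> \<Inter>T" "x \<notin> \<Union>R" by blast
  show ?thesis
  proof (intro exI ballI)
    fix U assume U: "U \<in> N"
    show "x \<in> U \<longleftrightarrow> y \<in> \<psi> U"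
    proof (cases "y \<in> \<psi> U")
      case True
      then have "U \<in> T" unfolding T_def using U by blast
      then show ?thesis using x(1) True by blast
    next
      case False
      then have "U \<in> R" unfolding R_def T_def using U by blast
      then show ?thesis using x(2) False by blast
    qed
  qed
qed

lemma hom_wd:
  assumes h: "hom_on I \<psi>" and S: "finite S" "S \<subseteq> I" and T: "finite T" "T \<subseteq> I"
    and eq: "(\<lambda>x. \<Sum>U\<in>S. c U * indicator U x) = (\<lambda>x. \<Sum>U\<in>T. d U * indicator U x)"
  shows "(\<lambda>x. \<Sum>U\<in>S. c U * indicator (\<psi> U) x) = (\<lambda>x. (\<Sum>U\<in>T. d U * indicator (\<psi> U) x :: 'r::comm_ring_1))"
proof
  fix y
  show "(\<Sum>U\<in>S. c U * indicator (\<psi> U) y) = (\<Sum>U\<in>T. d U * indicator (\<psi> U) y)"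
  proof (cases "\<exists>U0\<in>S \<union> T. y \<in> \<psi> U0")
    case False
    then show ?thesis by (simp add: indicator_def)
  next
    case True
    then obtain U0 where "U0 \<in> S \<union> T" "y \<in> \<psi> U0" by blast
    from hom_atom[OF h _ _ this] S T obtain x where x: "\<forall>U\<in>S \<union> T. x \<in> U \<longleftrightarrow> y \<in> \<psi> U" by auto
    have "(\<Sum>U\<in>S. c U * indicator (\<psi> U) y) = (\<Sum>U\<in>S. c U * indicator U x)"
      using x by (intro sum.cong) (auto simp: indicator_def)
    also have "\<dots> = (\<Sum>U\<in>T. d U * indicator U x)" using fun_cong[OF eq, of x] .
    also have "\<dots> = (\<Sum>U\<in>T. d U * indicator (\<psi> U) y)"
      using x by (intro sum.cong) (auto simp: indicator_def)
    finally show ?thesis .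
  qed
qed

lemma lc_map_eq:
  assumes h: "hom_on I \<psi>" and S: "finite S" "S \<subseteq> I"
  shows "lc_map I \<psi> (\<lambda>x. \<Sum>U\<in>S. c U * indicator U x) = (\<lambda>x. (\<Sum>U\<in>S. c U * indicator (\<psi> U) x :: 'r::comm_ring_1))"
  unfolding lc_map_def
proof (rule the_equality)
  show "\<exists>S' c'. finite S' \<and> S' \<subseteq> I \<and> (\<lambda>x. \<Sum>U\<in>S. c U * indicator U x) = (\<lambda>x. \<Sum>U\<in>S'. c' U * indicator U x) \<and>
      (\<lambda>x. \<Sum>U\<in>S. c U * indicator (\<psi> U) x) = (\<lambda>x. \<Sum>U\<in>S'. c' U * indicator (\<psi> U) x)"
    using S by blast
next
  fix F assume "\<exists>S' c'. finite S' \<and> S' \<subseteq> I \<and> (\<lambda>x. \<Sum>U\<in>S. c U * indicator U x) = (\<lambda>x. \<Sum>U\<in>S'. c' U * indicator U x) \<and>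
      F = (\<lambda>x. \<Sum>U\<in>S'. c' U * indicator (\<psi> U) x)"
  then obtain S' c' where "finite S'" "S' \<subseteq> I" "(\<lambda>x. \<Sum>U\<in>S. c U * indicator U x) = (\<lambda>x. \<Sum>U\<in>S'. c' U * indicator U x)"
      "F = (\<lambda>x. \<Sum>U\<in>S'. c' U * indicator (\<psi> U) x)" by blast
  then show "F = (\<lambda>x. \<Sum>U\<in>S. c U * indicator (\<psi> U) x)"
    using hom_wd[OF h S, of S' c c'] by simp
qed

lemma lc_map_Lc:
  assumes h: "hom_on I \<psi>" and f: "f \<in> Lc J" and J: "J \<subseteq> I"
  shows "lc_map I \<psi> f \<in> Lc (\<psi> ` J)"
proof -
  obtain S c where S: "finite S" "S \<subseteq> J" "f = (\<lambda>x. \<Sum>U\<in>S. c U * indicator U x)"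
    using f unfolding Lc_def by blast
  have "lc_map I \<psi> f = (\<lambda>x. \<Sum>U\<in>S. c U * indicator (\<psi> U) x)"
    unfolding S(3) using S(2) J by (intro lc_map_eq[OF h S(1)]) blast
  also have "\<dots> = (\<lambda>x. \<Sum>U\<in>\<psi> ` S. (\<Sum>V\<in>{V\<in>S. \<psi> V = U}. c V) * indicator U x)"
  proof
    fix x show "(\<Sum>U\<in>S. c U * indicator (\<psi> U) x) = (\<Sum>U\<in>\<psi> ` S. (\<Sum>V\<in>{V\<in>S. \<psi> V = U}. c V) * indicator U x)"
    proof -
      have "(\<Sum>U\<in>S. c U * indicator (\<psi> U) x) = (\<Sum>U\<in>\<psi> ` S. \<Sum>V\<in>{V\<in>S. \<psi> V = U}. c V * indicator (\<psi> V) x)"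
        by (rule sum.image_gen[OF S(1)])
      also have "\<dots> = (\<Sum>U\<in>\<psi> ` S. \<Sum>V\<in>{V\<in>S. \<psi> V = U}. c V * indicator U x)"
        by (intro sum.cong refl) auto
      also have "\<dots> = (\<Sum>U\<in>\<psi> ` S. (\<Sum>V\<in>{V\<in>S. \<psi> V = U}. c V) * indicator U x)"
        by (simp only: sum_distrib_right)
      finally show ?thesis .
    qed
  qed
  finally have E: "lc_map I \<psi> f = (\<lambda>x. \<Sum>U\<in>\<psi> ` S. (\<Sum>V\<in>{V\<in>S. \<psi> V = U}. c V) * indicator U x)" .
  have F: "finite (\<psi> ` S)" "\<psi> ` S \<subseteq> \<psi> ` J" using S by auto
  show ?thesis unfolding Lc_def
    by (rule CollectI, rule exI[of _ "\<psi> ` S"], rule exI[of _ "\<lambda>U. \<Sum>V\<in>{V\<in>S. \<psi> V = U}. c V"])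
      (intro conjI F E)
qed

lemma lc_map_zero:
  assumes h: "hom_on I \<psi>"
  shows "lc_map I \<psi> (\<lambda>x. 0) = (\<lambda>x. 0 :: 'r::comm_ring_1)"
  using lc_map_eq[OF h, of "{}" "\<lambda>_. 0 :: 'r"] by simp


lemma LcI: "finite S \<Longrightarrow> S \<subseteq> I \<Longrightarrow> f = (\<lambda>x. \<Sum>U\<in>S. c U * indicator U x) \<Longrightarrow> f \<in> Lc I"
  unfolding Lc_def by blast

lemma Lc_zero: "(\<lambda>x. 0) \<in> Lc I"
  unfolding Lc_def by (rule CollectI, rule exI[of _ "{}"]) simp

lemma Lc_single: "W \<in> I \<Longrightarrow> (\<lambda>x. r * indicator W x) \<in> Lc I"
  unfolding Lc_def by (rule CollectI, rule exI[of _ "{W}"], rule exI[of _ "\<lambda>_. r"]) simp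

lemma Lc_mono: "I \<subseteq> J \<Longrightarrow> Lc I \<subseteq> Lc J"
  unfolding Lc_def by blast

lemma Lc_add:
  assumes "f \<in> Lc I" "g \<in> Lc I"
  shows "(\<lambda>x. f x + g x) \<in> Lc I"
proof -
  obtain S c where S: "finite S" "S \<subseteq> I" "f = (\<lambda>x. \<Sum>U\<in>S. c U * indicator U x)"
    using assms(1) unfolding Lc_def by blast
  obtain T d where T: "finite T" "T \<subseteq> I" "g = (\<lambda>x. \<Sum>U\<in>T. d U * indicator U x)"
    using assms(2) unfolding Lc_def by blast
  define e where "e U = (if U \<in> S then c U else 0) + (if U \<in> T then d U else 0)" for U
  have "(\<lambda>x. f x + g x) = (\<lambda>x. \<Sum>U\<in>S \<union> T. e U * indicator U x)"
  proof
    fix x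
    have "(\<Sum>U\<in>S \<union> T. e U * indicator U x) =
        (\<Sum>U\<in>S \<union> T. (if U \<in> S then c U * indicator U x else 0)) + (\<Sum>U\<in>S \<union> T. (if U \<in> T then d U * indicator U x else 0))"
      unfolding e_def sum.distrib[symmetric] by (rule sum.cong) (auto simp: distrib_right)
    also have "\<dots> = (\<Sum>U\<in>(S \<union> T) \<inter> S. c U * indicator U x) + (\<Sum>U\<in>(S \<union> T) \<inter> T. d U * indicator U x)"
      using S T by (simp add: sum.inter_restrict[symmetric])
    also have "\<dots> = f x + g x" using S T by (simp add: Un_Int_eq)
    finally show "f x + g x = (\<Sum>U\<in>S \<union> T. e U * indicator U x)" by simp
  qed
  then show ?thesis using S T by (intro LcI[of "S \<union> T" _ _ e]) auto
qed

lemma Lc_scale: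
  assumes "f \<in> Lc I"
  shows "(\<lambda>x. r * f x) \<in> Lc I"
proof -
  obtain S c where S: "finite S" "S \<subseteq> I" "f = (\<lambda>x. \<Sum>U\<in>S. c U * indicator U x)"
    using assms(1) unfolding Lc_def by blast
  have "(\<lambda>x. r * f x) = (\<lambda>x. \<Sum>U\<in>S. (r * c U) * indicator U x)"
    using S by (simp add: sum_distrib_left mult.assoc)
  then show ?thesis using S by (intro LcI[of S _ _ "\<lambda>U. r * c U"]) auto
qed

lemma Lc_sum:
  assumes "finite K" "\<And>k. k \<in> K \<Longrightarrow> f k \<in> Lc I"
  shows "(\<lambda>x. \<Sum>k\<in>K. f k x) \<in> Lc I"
  using assms
proof (induction K rule: finite_induct)
  case empty then show ?case using Lc_zero by simp
next
  case (insert k K)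
  then have "(\<lambda>x. f k x + (\<Sum>k\<in>K. f k x)) \<in> Lc I"
    using Lc_add[of "f k" I "\<lambda>x. \<Sum>k\<in>K. f k x"] by auto
  then show ?case using insert by simp
qed

lemma Lc_mult:
  assumes f: "f \<in> Lc I" and g: "g \<in> Lc J" and K: "\<And>U V. U \<in> I \<Longrightarrow> V \<in> J \<Longrightarrow> U \<inter> V \<in> K"
  shows "(\<lambda>x. f x * g x) \<in> Lc K"
proof -
  obtain S c where S: "finite S" "S \<subseteq> I" "f = (\<lambda>x. \<Sum>U\<in>S. c U * indicator U x)"
    using f unfolding Lc_def by blast
  obtain T d where T: "finite T" "T \<subseteq> J" "g = (\<lambda>x. \<Sum>U\<in>T. d U * indicator U x)"
    using g unfolding Lc_def by blast
  have "(\<lambda>x. f x * g x) = (\<lambda>x. \<Sum>p\<in>S \<times> T. (c (fst p) * d (snd p)) * indicator (fst p \<inter> snd p) x)"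
  proof
    fix x
    show "f x * g x = (\<Sum>p\<in>S \<times> T. (c (fst p) * d (snd p)) * indicator (fst p \<inter> snd p) x)"
      unfolding S(3) T(3) sum_product sum.cartesian_product
      by (rule sum.cong) (auto simp: indicator_inter_arith ac_simps)
  qed
  moreover have "(\<lambda>x. \<Sum>p\<in>S \<times> T. (c (fst p) * d (snd p)) * indicator (fst p \<inter> snd p) x) \<in> Lc K"
    proof (intro Lc_sum Lc_single)
    fix p assume "p \<in> S \<times> T"
    then have "fst p \<in> I" "snd p \<in> J" using S(2) T(2) by auto
    then show "fst p \<inter> snd p \<in> K" by (rule K)
  qed (use S T in simp)
  ultimately show ?thesis by simp
qed


lemma PA_D:
  assumes "partial_action B I \<phi>"
  shows "gba B" "gba_ideal B (I t)" "bij_betw (\<phi> t) (I (- t)) (I t)" "\<phi> t {} = {}"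
    "\<And>U V. U \<in> I (- t) \<Longrightarrow> V \<in> I (- t) \<Longrightarrow> \<phi> t (U \<union> V) = \<phi> t U \<union> \<phi> t V \<and> \<phi> t (U \<inter> V) = \<phi> t U \<inter> \<phi> t V"
    "\<phi> s ` (I (- s) \<inter> I t) = I s \<inter> I (s + t)"
proof -
  note A = assms[unfolded partial_action_def]
  show "gba B" using A by (elim conjE)
  show "gba_ideal B (I t)" using A by (elim conjE) (erule allE)
  show "bij_betw (\<phi> t) (I (- t)) (I t)" using A by (elim conjE) (drule spec[of _ t], elim conjE)
  show "\<phi> t {} = {}" using A by (elim conjE) (drule spec[of _ t], elim conjE)
  show "\<phi> s ` (I (- s) \<inter> I t) = I s \<inter> I (s + t)" using A by (elim conjE) (drule spec[of _ s], drule spec[of _ t])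
  fix U V assume "U \<in> I (- t)" "V \<in> I (- t)"
  then show "\<phi> t (U \<union> V) = \<phi> t U \<union> \<phi> t V \<and> \<phi> t (U \<inter> V) = \<phi> t U \<inter> \<phi> t V"
    using A by (elim conjE) (drule spec[of _ t], elim conjE, drule bspec[of _ _ U], assumption, drule bspec[of _ _ V])
qed

lemma PA_sub: "partial_action B I \<phi> \<Longrightarrow> I t \<subseteq> B"
  using PA_D(2) unfolding gba_ideal_def by blast

lemma PA_ideal: "partial_action B I \<phi> \<Longrightarrow> U \<in> I t \<Longrightarrow> V \<in> B \<Longrightarrow> U \<inter> V \<in> I t"
  using PA_D(2) unfolding gba_ideal_def by blast

lemma PA_img: "partial_action B I \<phi> \<Longrightarrow> \<phi> t ` I (- t) = I t"
  using PA_D(3) by (meson bij_betw_imp_surj_on)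

lemma PA_img2: "partial_action B I \<phi> \<Longrightarrow> \<phi> s ` (I (- s) \<inter> I t) = I s \<inter> I (s + t)"
  by (rule PA_D(6))

lemma PA_hom:
  assumes P: "partial_action B I \<phi>"
  shows "hom_on (I (- t)) (\<phi> t)"
  unfolding hom_on_def
proof (intro conjI ballI)
  show "{} \<in> I (- t)" using PA_D(2)[OF P, of "- t"] unfolding gba_ideal_def by blast
  show "\<phi> t {} = {}" using PA_D(4)[OF P] .
  fix U V assume U: "U \<in> I (- t)" and V: "V \<in> I (- t)"
  have UB: "U \<in> B" "V \<in> B" using PA_sub[OF P] U V by blast+
  show "U \<union> V \<in> I (- t)" using PA_D(2)[OF P, of "- t"] U V unfolding gba_ideal_def by blast
  show "U \<inter> V \<in> I (- t)" using PA_ideal[OF P U UB(2)] .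
  have "U - V \<in> B" using PA_D(1)[OF P] UB unfolding gba_def by blast
  then have "U \<inter> (U - V) \<in> I (- t)" using PA_ideal[OF P U] by blast
  then show "U - V \<in> I (- t)" by (simp add: Int_absorb1 Diff_subset)
  show "\<phi> t (U \<union> V) = \<phi> t U \<union> \<phi> t V" using PA_D(5)[OF P U V] by blast
  show "\<phi> t (U \<inter> V) = \<phi> t U \<inter> \<phi> t V" using PA_D(5)[OF P U V] by blast
qed

lemma cp_mult_in:
  fixes a b :: "'g::group_add \<Rightarrow> 'x \<Rightarrow> 'r::comm_ring_1"
  assumes hom: "\<And>g. hom_on (I2 (- g)) (\<phi>2 g)"
    and fa: "finite {g. a g \<noteq> (\<lambda>_. 0)}" and fb: "finite {g. b g \<noteq> (\<lambda>_. 0)}"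
    and tm: "\<And>g k. lc_map (I2 (- g)) (\<phi>2 g) (\<lambda>y. lc_map (I2 g) (\<phi>2 (- g)) (a g) y * b (- g + k) y) \<in> Lc (I1 k)"
  shows "cp_mult I2 \<phi>2 a b \<in> cp_carrier I1"
proof -
  let ?sa = "{g. a g \<noteq> (\<lambda>_. 0)}" and ?sb = "{g. b g \<noteq> (\<lambda>_. 0)}"
  have "{k. cp_mult I2 \<phi>2 a b k \<noteq> (\<lambda>_. 0)} \<subseteq> (\<lambda>p. fst p + snd p) ` (?sa \<times> ?sb)"
  proof
    fix k assume k: "k \<in> {k. cp_mult I2 \<phi>2 a b k \<noteq> (\<lambda>_. 0)}"
    show "k \<in> (\<lambda>p. fst p + snd p) ` (?sa \<times> ?sb)"
    proof (rule ccontr)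
      assume nk: "k \<notin> (\<lambda>p. fst p + snd p) ` (?sa \<times> ?sb)"
      have "\<And>g. g \<in> ?sa \<Longrightarrow> b (- g + k) = (\<lambda>_. 0)"
      proof (rule ccontr)
        fix g assume "g \<in> ?sa" "b (- g + k) \<noteq> (\<lambda>_. 0)"
        then have "(g, - g + k) \<in> ?sa \<times> ?sb" by auto
        then have "k \<in> (\<lambda>p. fst p + snd p) ` (?sa \<times> ?sb)"
          by (rule rev_image_eqI) (simp add: add.assoc[symmetric])
        with nk show False by blast
      qed
      then have Z: "lc_map (I2 (- g)) (\<phi>2 g) (\<lambda>y. lc_map (I2 g) (\<phi>2 (- g)) (a g) y * b (- g + k) y) = (\<lambda>_. 0)"
        if g: "g \<in> ?sa" for g
      proof -
        have "(\<lambda>y. lc_map (I2 g) (\<phi>2 (- g)) (a g) y * b (- g + k) y) = (\<lambda>y. 0)"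
          using \<open>\<And>g. g \<in> ?sa \<Longrightarrow> b (- g + k) = (\<lambda>_. 0)\<close>[OF g] by simp
        then show ?thesis using lc_map_zero[OF hom] by simp
      qed
      have "cp_mult I2 \<phi>2 a b k = (\<lambda>_. 0)"
        unfolding cp_mult_def
      proof (rule ext, rule sum.neutral, rule ballI)
        fix x g assume "g \<in> ?sa"
        then show "lc_map (I2 (- g)) (\<phi>2 g) (\<lambda>y. lc_map (I2 g) (\<phi>2 (- g)) (a g) y * b (- g + k) y) x = 0"
          using Z by simp
      qed
      with k show False by simp
    qed
  qed
  then have "finite {k. cp_mult I2 \<phi>2 a b k \<noteq> (\<lambda>_. 0)}"
    using fa fb by (meson finite_SigmaI finite_imageI finite_subset)
  moreover have "\<forall>k. cp_mult I2 \<phi>2 a b k \<in> Lc (I1 k)"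
    unfolding cp_mult_def using fa tm by (intro allI Lc_sum) auto
  ultimately show ?thesis unfolding cp_carrier_def by blast
qed

theorem lemma4p10:
  fixes B1 B2 :: "'x set set"
    and I1 I2 :: "'g::group_add \<Rightarrow> 'x set set"
    and \<phi>1 \<phi>2 :: "'g \<Rightarrow> 'x set \<Rightarrow> 'x set"
  assumes "partial_subaction B1 I1 \<phi>1 B2 I2 \<phi>2"
    and "gba_ideal B2 B1"
    and "\<And>g. I1 g = B1 \<inter> I2 g"
  shows "two_sided_ideal (cp_carrier I1 :: ('g \<Rightarrow> 'x \<Rightarrow> 'r::comm_ring_1) set)
           (cp_carrier I2) (cp_mult I2 \<phi>2)"
proof -
  have P1: "partial_action B1 I1 \<phi>1" and P2: "partial_action B2 I2 \<phi>2"
    and B12: "B1 \<subseteq> B2" and I12: "\<And>t. I1 t \<subseteq> I2 t"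
    and ph: "\<And>t U. U \<in> I1 (- t) \<Longrightarrow> \<phi>1 t U = \<phi>2 t U"
    using assms(1) unfolding partial_subaction_def by blast+
  have Bid: "\<And>U V. U \<in> B1 \<Longrightarrow> V \<in> B2 \<Longrightarrow> U \<inter> V \<in> B1"
    using assms(2) unfolding gba_ideal_def by blast
  have I1eq: "\<And>g. I1 g = B1 \<inter> I2 g" by (rule assms(3))
  have hom2: "\<And>g. hom_on (I2 (- g)) (\<phi>2 g)" using PA_hom[OF P2] .
  have hom2': "\<And>g. hom_on (I2 g) (\<phi>2 (- g))" using PA_hom[OF P2, of "- _"] by simp
  have img1: "\<And>g. \<phi>2 (- g) ` I1 g \<subseteq> I1 (- g)"
  proof
    fix g W assume "W \<in> \<phi>2 (- g) ` I1 g"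
    then obtain U where U: "U \<in> I1 g" "W = \<phi>2 (- g) U" by blast
    then have "W = \<phi>1 (- g) U" using ph[of U "- g"] by simp
    then show "W \<in> I1 (- g)" using PA_img[OF P1, of "- g"] U by auto
  qed
  have img2: "\<And>g. \<phi>2 (- g) ` I2 g \<subseteq> I2 (- g)"
    using PA_img[OF P2, of "- _"] by simp
  define J where "J g k = I1 (- g) \<inter> I2 (- g + k)" for g k
  have T: "lc_map (I2 (- g)) (\<phi>2 g) p \<in> Lc (I1 k)" if p: "p \<in> Lc (J g k)" for g k and p :: "'x \<Rightarrow> 'r"
  proof -
    have JI: "J g k \<subseteq> I2 (- g)" unfolding J_def using I12 by blast
    have "\<phi>2 g ` J g k \<subseteq> I1 k"
    proof
      fix W assume "W \<in> \<phi>2 g ` J g k"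
      then obtain U where U: "U \<in> J g k" "W = \<phi>2 g U" by blast
      have "W = \<phi>1 g U" using ph[of U g] U unfolding J_def by simp
      then have "W \<in> I1 g" using PA_img[OF P1, of g] U unfolding J_def by auto
      then have W1: "W \<in> B1" using PA_sub[OF P1] by blast
      have "W \<in> \<phi>2 g ` (I2 (- g) \<inter> I2 (- g + k))" using U I12 unfolding J_def by blast
      then have "W \<in> I2 k" using PA_img2[OF P2, of g "- g + k"] by (simp add: add.assoc[symmetric])
      with W1 show "W \<in> I1 k" using I1eq by blast
    qed
    then show ?thesis using lc_map_Lc[OF hom2 p JI] Lc_mono by blast
  qed
  have M1: "(\<lambda>y. lc_map (I2 g) (\<phi>2 (- g)) f y * h y) \<in> Lc (J g k)"
    if f: "f \<in> Lc (I1 g)" and h: "h \<in> Lc (I2 (- g + k))" for g k and f h :: "'x \<Rightarrow> 'r"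
  proof -
    have "lc_map (I2 g) (\<phi>2 (- g)) f \<in> Lc (I1 (- g))"
      using lc_map_Lc[OF hom2' f I12] img1 Lc_mono by blast
    then show ?thesis
    proof (rule Lc_mult[OF _ h])
      fix U V assume U: "U \<in> I1 (- g)" and V: "V \<in> I2 (- g + k)"
      have V2: "V \<in> B2" using V PA_sub[OF P2] by blast
      have U1: "U \<in> B1" "U \<in> I2 (- g)" using U I1eq by auto
      have "U \<inter> V \<in> B1" using Bid U1 V2 by blast
      moreover have "U \<inter> V \<in> I2 (- g)" using PA_ideal[OF P2 U1(2) V2] .
      moreover have "V \<inter> U \<in> I2 (- g + k)" using PA_ideal[OF P2 V] U1 B12 by blast
      ultimately show "U \<inter> V \<in> J g k" unfolding J_def using I1eq by (simp add: Int_commute)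
    qed
  qed
  have M2: "(\<lambda>y. lc_map (I2 g) (\<phi>2 (- g)) f y * h y) \<in> Lc (J g k)"
    if f: "f \<in> Lc (I2 g)" and h: "h \<in> Lc (I1 (- g + k))" for g k and f h :: "'x \<Rightarrow> 'r"
  proof -
    have "lc_map (I2 g) (\<phi>2 (- g)) f \<in> Lc (I2 (- g))"
      using lc_map_Lc[OF hom2' f order_refl] img2 Lc_mono by blast
    then show ?thesis
    proof (rule Lc_mult[OF _ h])
      fix U V assume U: "U \<in> I2 (- g)" and V: "V \<in> I1 (- g + k)"
      have U2: "U \<in> B2" using U PA_sub[OF P2] by blast
      have V1: "V \<in> B1" "V \<in> I2 (- g + k)" using V I1eq by auto
      have "V \<inter> U \<in> B1" using Bid V1 U2 by blast
      moreover have "U \<inter> V \<in> I2 (- g)" using PA_ideal[OF P2 U] V1 B12 by blast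
      moreover have "V \<inter> U \<in> I2 (- g + k)" using PA_ideal[OF P2 V1(2) U2] .
      ultimately show "U \<inter> V \<in> J g k" unfolding J_def using I1eq by (auto simp add: Int_commute)
    qed
  qed
  have sub: "cp_carrier I1 \<subseteq> (cp_carrier I2 :: ('g \<Rightarrow> 'x \<Rightarrow> 'r) set)"
    unfolding cp_carrier_def using Lc_mono[OF I12] by blast
  have zero: "(\<lambda>_ _. 0) \<in> (cp_carrier I1 :: ('g \<Rightarrow> 'x \<Rightarrow> 'r) set)"
    unfolding cp_carrier_def using Lc_zero by auto
  have add: "(\<lambda>k x. a k x + b k x) \<in> cp_carrier I1"
    if "a \<in> cp_carrier I1" "b \<in> cp_carrier I1" for a b :: "'g \<Rightarrow> 'x \<Rightarrow> 'r"
  proof -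
    have "{k. (\<lambda>x. a k x + b k x) \<noteq> (\<lambda>_. 0)} \<subseteq> {g. a g \<noteq> (\<lambda>_. 0)} \<union> {g. b g \<noteq> (\<lambda>_. 0)}"
      by auto
    then show ?thesis using that unfolding cp_carrier_def
      by (auto intro: Lc_add finite_subset)
  qed
  have scale: "(\<lambda>k x. r * a k x) \<in> cp_carrier I1"
    if "a \<in> cp_carrier I1" for a :: "'g \<Rightarrow> 'x \<Rightarrow> 'r" and r
  proof -
    have "{k. (\<lambda>x. r * a k x) \<noteq> (\<lambda>_. 0)} \<subseteq> {g. a g \<noteq> (\<lambda>_. 0)}"
      by auto
    then show ?thesis using that unfolding cp_carrier_def
      by (auto intro: Lc_scale finite_subset)
  qed
  have mult: "cp_mult I2 \<phi>2 a b \<in> cp_carrier I1 \<and> cp_mult I2 \<phi>2 b a \<in> cp_carrier I1"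
    if a: "a \<in> cp_carrier I1" and b: "b \<in> cp_carrier I2" for a b :: "'g \<Rightarrow> 'x \<Rightarrow> 'r"
  proof
    have fa: "finite {g. a g \<noteq> (\<lambda>_. 0)}" and ag: "\<And>g. a g \<in> Lc (I1 g)"
      using a unfolding cp_carrier_def by blast+
    have fb: "finite {g. b g \<noteq> (\<lambda>_. 0)}" and bg: "\<And>g. b g \<in> Lc (I2 g)"
      using b unfolding cp_carrier_def by blast+
    show "cp_mult I2 \<phi>2 a b \<in> cp_carrier I1"
      by (rule cp_mult_in[of I2 \<phi>2 a b I1, OF hom2 fa fb T[OF M1[OF ag bg]]])
    show "cp_mult I2 \<phi>2 b a \<in> cp_carrier I1"
      by (rule cp_mult_in[of I2 \<phi>2 b a I1, OF hom2 fb fa T[OF M2[OF bg ag]]])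
  qed
  show ?thesis unfolding two_sided_ideal_def
    using sub zero add scale mult by blast
qed

end
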